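(* Let $D$ be a 2-connected rooted digraph with root $r$. Then there exists a spanning subdigraph $A$ of $D$ which is acyclic, in which every vertex is reachable from $r$ by a directed path, and which contains at least half of the arcs of $D-r$ (the arcs of $D$ not incident to $r$).
   Context: A rooted digraph is a loopless digraph $D$ with a distinguished vertex $r$ (the root) such that: there is no arc $(u,r)$ for any $u\in V(D)$; there is no arc $(x,y)$ with $x\neq r$ and $y$ an outneighbour of $r$; and $r$ has outdegree at least 2. A cut of a rooted digraph $D$ is a set $S\subseteq V(D)\setminus\{r\}$ such that some vertex $z\notin S$ is not the endpoint of any directed path starting at $r$ in $D-S$. $D$ is 2-connected if it has no cut of size at most 1. *)

theory Defs
  imports "Graph_Theory.Graph_Theory"
begin

definition rooted_digraph :: "('a,'b) pre_digraph \<Rightarrow> 'a \<Rightarrow> bool" where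
  "rooted_digraph D r \<equiv>
     fin_digraph D \<and> loopfree_digraph D \<and> r \<in> verts D \<and>
     (\<forall>e \<in> arcs D. head D e \<noteq> r) \<and>
     (\<forall>e \<in> arcs D. tail D e \<noteq> r \<longrightarrow> \<not> (r \<rightarrow>\<^bsub>D\<^esub> head D e)) \<and>
     2 \<le> out_degree D r"

definition is_cut :: "('a,'b) pre_digraph \<Rightarrow> 'a \<Rightarrow> 'a set \<Rightarrow> bool" where
  "is_cut D r S \<equiv> S \<subseteq> verts D - {r} \<and>
     (\<exists>z \<in> verts D - S. \<not> (r \<rightarrow>\<^sup>*\<^bsub>D \<restriction> (verts D - S)\<^esub> z))"

definition two_connected :: "('a,'b) pre_digraph \<Rightarrow> 'a \<Rightarrow> bool" where
  "two_connected D r \<equiv> \<not> (\<exists>S. is_cut D r S \<and> card S \<le> 1)"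

definition acyclic_digraph :: "('a,'b) pre_digraph \<Rightarrow> bool" where
  "acyclic_digraph A \<equiv> \<not> (\<exists>p. pre_digraph.cycle A p)"

end

theory Submission
  imports Defs
begin

inductive rch :: "'b set \<Rightarrow> ('b\<Rightarrow>'a) \<Rightarrow> ('b\<Rightarrow>'a) \<Rightarrow> 'a set \<Rightarrow> 'a set \<Rightarrow> 'a \<Rightarrow> bool"
  for E t h S X where
  base: "x \<in> X \<Longrightarrow> x \<in> S \<Longrightarrow> rch E t h S X x"
| step: "rch E t h S X u \<Longrightarrow> e \<in> E \<Longrightarrow> t e = u \<Longrightarrow> h e \<in> S \<Longrightarrow> rch E t h S X (h e)"

lemma rch_in: "rch E t h S X w \<Longrightarrow> w \<in> S"
  by (induction rule: rch.induct) auto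

lemma rch_mono: "rch E t h S X w \<Longrightarrow> S \<subseteq> S' \<Longrightarrow> X \<subseteq> X' \<Longrightarrow> rch E t h S' X' w"
  by (induction rule: rch.induct) (auto intro: rch.intros)

lemma rch_inv: "rch E t h S X w \<Longrightarrow> w \<in> X \<or> (\<exists>e\<in>E. rch E t h S X (t e) \<and> h e = w)"
  by (induction rule: rch.induct) auto

lemma rch_entry: "rch E t h S X w \<Longrightarrow> rch E t h (S - T) X w \<or> (\<exists>x. x \<in> X \<and> x \<in> S \<and> x \<in> T)
   \<or> (\<exists>e\<in>E. rch E t h (S - T) X (t e) \<and> h e \<in> T \<and> h e \<in> S)"
proof (induction rule: rch.induct)
  case (base x)
  then show ?case by (cases "x \<in> T") (auto intro: rch.base)
next
  case (step u e)
  then show ?case by (cases "h e \<in> T") (auto intro: rch.step)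
qed

lemma rch_P: assumes "rch E t h S X w" "v \<noteq> w"
  shows "rch E t h (S - {v}) X w \<or> rch E t h (S - {w}) X v"
proof -
  from rch_entry[OF assms(1), of "{v,w}"] show ?thesis
  proof (elim disjE exE bexE conjE)
    assume "rch E t h (S - {v, w}) X w" then show ?thesis using rch_in by fastforce
  next
    fix x assume "x \<in> X" "x \<in> S" "x \<in> {v,w}" then show ?thesis using assms(2)
      by (auto intro: rch.base)
  next
    fix e assume e: "e \<in> E" "rch E t h (S - {v, w}) X (t e)" "h e \<in> {v,w}" "h e \<in> S"
    then have a: "rch E t h (S - {v}) X (t e)" "rch E t h (S - {w}) X (t e)"
      by (auto elim: rch_mono)
    show ?thesis
    proof (cases "h e = w")
      case True
      then show ?thesis using rch.step[OF a(1) e(1) refl] e assms(2) by auto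
    next
      case False
      then show ?thesis using rch.step[OF a(2) e(1) refl] e by auto
    qed
  qed
qed


lemma choose_z:
  assumes fin: "finite Z" and loop: "\<forall>e\<in>E. t e \<noteq> h e" and rL: "r \<in> L" and disj: "L \<inter> Z = {}"
    and IL: "\<forall>u. u \<notin> L \<longrightarrow> (\<forall>w \<in> Z - {u}. rch E t h (L \<union> Z - {u}) L w)"
    and IL0: "\<forall>w \<in> Z. rch E t h (L \<union> Z) L w"
    and IR: "\<forall>w\<in>Z. rch E t h (insert r Z) {r} w"
    and ne: "Z \<noteq> {}"
  shows "\<exists>z\<in>Z. (\<exists>e\<in>E. h e = z \<and> t e \<in> L) \<and> (\<forall>w\<in>Z-{z}. rch E t h (insert r Z - {z}) {r} w)"
proof -
  define H where "H = insert r Z"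
  define Dom where "Dom z = {w \<in> Z. w \<noteq> z \<and> \<not> rch E t h (H - {z}) {r} w}" for z
  define C where "C = {z\<in>Z. \<exists>e\<in>E. h e = z \<and> t e \<in> L}"
  have rZ: "r \<notin> Z" using rL disj by auto
  have fact1: "Dom q \<subset> Dom z" if q: "q \<in> Dom z" and z: "z \<in> Z" for q z
  proof -
    have qz: "q \<noteq> z" "q \<in> Z" "\<not> rch E t h (H - {z}) {r} q" using q by (auto simp: Dom_def)
    have "Dom q \<subseteq> Dom z"
    proof
      fix w assume w: "w \<in> Dom q"
      then have w1: "w \<in> Z" "w \<noteq> q" "\<not> rch E t h (H - {q}) {r} w" by (auto simp: Dom_def)
      have "w \<noteq> z"
      proof
        assume "w = z"
        have "rch E t h H {r} q" using IR qz H_def by auto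
        from rch_P[OF this, of z] qz w1 \<open>w = z\<close> show False by auto
      qed
      moreover have "\<not> rch E t h (H - {z}) {r} w"
      proof
        assume a: "rch E t h (H - {z}) {r} w"
        from rch_entry[OF a, of "{q}"] show False
        proof (elim disjE exE bexE conjE)
          assume "rch E t h (H - {z} - {q}) {r} w"
          then have "rch E t h (H - {q}) {r} w" by (rule rch_mono) auto
          then show False using w1 by simp
        next
          fix x assume "x \<in> {r}" "x \<in> {q}" then show False using qz rZ by auto
        next
          fix e assume e: "e \<in> E" "rch E t h (H - {z} - {q}) {r} (t e)" "h e \<in> {q}" "h e \<in> H - {z}"
          then have "rch E t h (H - {z}) {r} (t e)" by (auto elim: rch_mono)
          from rch.step[OF this e(1) refl] e qz show False by auto
        qed
      qed
      ultimately show "w \<in> Dom z" using w1 by (auto simp: Dom_def)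
    qed
    moreover have "q \<notin> Dom q" by (simp add: Dom_def)
    ultimately show ?thesis using q by blast
  qed
  obtain w0 where w0: "w0 \<in> Z" using ne by auto
  have "rch E t h (L \<union> Z) L w0" using IL0 w0 by auto
  from rch_entry[OF this, of Z] obtain c where c: "c \<in> C"
  proof (elim disjE exE bexE conjE)
    assume "rch E t h (L \<union> Z - Z) L w0" then show ?thesis using rch_in w0 by fastforce
  next
    fix x assume "x \<in> L" "x \<in> Z" then show ?thesis using disj by auto
  next
    fix e assume e: "e \<in> E" "rch E t h (L \<union> Z - Z) L (t e)" "h e \<in> Z"
    then have "t e \<in> L" using rch_in by fastforce
    then show ?thesis using e that by (auto simp: C_def)
  qed
  obtain z where z: "z \<in> C" and zmin: "\<And>y. y \<in> C \<Longrightarrow> card (Dom z) \<le> card (Dom y)"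
    using ex_has_least_nat[of "\<lambda>y. y \<in> C" c "\<lambda>y. card (Dom y)"] c by blast
  have zZ: "z \<in> Z" using z by (auto simp: C_def)
  have finD: "finite (Dom y)" for y using fin by (auto simp: Dom_def)
  have "Dom z = {}"
  proof (rule ccontr)
    assume "Dom z \<noteq> {}"
    then obtain w where w: "w \<in> Dom z" by auto
    have zL: "z \<notin> L" using zZ disj by auto
    have "rch E t h (L \<union> Z - {z}) L w" using IL zL w by (auto simp: Dom_def)
    from rch_entry[OF this, of "Dom z"] show False
    proof (elim disjE exE bexE conjE)
      assume "rch E t h (L \<union> Z - {z} - Dom z) L w" then show False using rch_in w by fastforce
    next
      fix x assume "x \<in> L" "x \<in> Dom z" then show False using disj by (auto simp: Dom_def)
    next
      fix e assume e: "e \<in> E" "rch E t h (L \<union> Z - {z} - Dom z) L (t e)" "h e \<in> Dom z"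
      have p: "t e \<in> L \<union> Z" "t e \<noteq> z" "t e \<notin> Dom z" using rch_in[OF e(2)] by auto
      show False
      proof (cases "t e \<in> L")
        case True
        then have "h e \<in> C" using e(1,3) by (auto simp: C_def Dom_def)
        moreover have "card (Dom (h e)) < card (Dom z)"
          using fact1[OF e(3) zZ] finD by (simp add: psubset_card_mono)
        ultimately show False using zmin by fastforce
      next
        case False
        then have "t e \<in> Z" using p by auto
        then have "rch E t h (H - {z}) {r} (t e)" using p by (auto simp: Dom_def)
        moreover have "h e \<in> H - {z}" using e(3) by (auto simp: Dom_def H_def)
        ultimately have "rch E t h (H - {z}) {r} (h e)" using rch.step e(1) by metis
        then show False using e(3) by (auto simp: Dom_def)
      qed
    qed
  qed
  then have "\<forall>w\<in>Z-{z}. rch E t h (insert r Z - {z}) {r} w" by (auto simp: Dom_def H_def)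
  then show ?thesis using z by (auto simp: C_def)
qed


lemma order_ex:
  assumes "finite Z" and loop: "\<forall>e\<in>E. t e \<noteq> h e" and "r \<in> L" and "L \<inter> Z = {}"
    and "\<forall>u. u \<notin> L \<longrightarrow> (\<forall>w \<in> Z - {u}. rch E t h (L \<union> Z - {u}) L w)"
    and "\<forall>w \<in> Z. rch E t h (L \<union> Z) L w"
    and "\<forall>w\<in>Z. rch E t h (insert r Z) {r} w"
  shows "\<exists>f::'a\<Rightarrow>nat. inj_on f Z \<and> (\<forall>z\<in>Z. (\<exists>e\<in>E. h e = z \<and> (t e \<in> L \<or> (t e \<in> Z \<and> f (t e) < f z)))
      \<and> (\<exists>e\<in>E. h e = z \<and> (t e = r \<or> (t e \<in> Z \<and> f (t e) > f z))))"
  using assms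
proof (induction "card Z" arbitrary: L Z rule: less_induct)
  case less
  show ?case
  proof (cases "Z = {}")
    case True
    have "inj_on (\<lambda>_::'a. 0::nat) Z" using True by simp
    then show ?thesis using True by (intro exI[of _ "\<lambda>_::'a. 0::nat"]) simp
  next
    case False
    obtain z where z: "z \<in> Z" and ze: "\<exists>e\<in>E. h e = z \<and> t e \<in> L"
      and zR: "\<forall>w\<in>Z-{z}. rch E t h (insert r Z - {z}) {r} w"
      using choose_z[OF less.prems(1-7) False] by blast
    have rZ: "r \<notin> Z" using less.prems by auto
    have lt: "card (Z - {z}) < card Z" by (rule card_Diff1_less[OF less.prems(1) z(1)])
    have i1: "\<forall>u. u \<notin> insert z L \<longrightarrow> (\<forall>w \<in> Z - {z} - {u}. rch E t h (insert z L \<union> (Z - {z}) - {u}) (insert z L) w)"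
    proof (intro allI impI ballI)
      fix u w assume "u \<notin> insert z L" "w \<in> Z - {z} - {u}"
      then have "rch E t h (L \<union> Z - {u}) L w" using less.prems(5) by auto
      then show "rch E t h (insert z L \<union> (Z - {z}) - {u}) (insert z L) w" by (rule rch_mono) auto
    qed
    have i2: "\<forall>w \<in> Z - {z}. rch E t h (insert z L \<union> (Z - {z})) (insert z L) w"
    proof
      fix w assume "w \<in> Z - {z}"
      then have "rch E t h (L \<union> Z) L w" using less.prems(6) by auto
      then show "rch E t h (insert z L \<union> (Z - {z})) (insert z L) w" by (rule rch_mono) auto
    qed
    have i3: "\<forall>w\<in>Z - {z}. rch E t h (insert r (Z - {z})) {r} w"
    proof -
      have "insert r Z - {z} = insert r (Z - {z})" using rZ z by auto
      then show ?thesis using zR by simp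
    qed
    have p1: "finite (Z - {z})" using less.prems(1) by simp
    have p3: "r \<in> insert z L" using less.prems(3) by simp
    have p4: "insert z L \<inter> (Z - {z}) = {}" using less.prems(4) by auto
    have IH: "\<exists>f'::'a\<Rightarrow>nat. inj_on f' (Z - {z}) \<and> (\<forall>x\<in>Z-{z}. (\<exists>e\<in>E. h e = x \<and> (t e \<in> insert z L \<or> (t e \<in> Z - {z} \<and> f' (t e) < f' x)))
      \<and> (\<exists>e\<in>E. h e = x \<and> (t e = r \<or> (t e \<in> Z - {z} \<and> f' (t e) > f' x))))"
      by (rule less.hyps[OF lt p1 loop p3 p4 i1 i2 i3])
    then obtain f' :: "'a \<Rightarrow> nat" where f'all: "inj_on f' (Z - {z}) \<and> (\<forall>x\<in>Z-{z}. (\<exists>e\<in>E. h e = x \<and> (t e \<in> insert z L \<or> (t e \<in> Z - {z} \<and> f' (t e) < f' x)))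
      \<and> (\<exists>e\<in>E. h e = x \<and> (t e = r \<or> (t e \<in> Z - {z} \<and> f' (t e) > f' x))))"
      by (elim exE) iprover
    note f' = conjunct1[OF f'all] and P = conjunct2[OF f'all]
    define f where "f x = (if x = z then 0 else Suc (f' x))" for x
    have "inj_on f Z" using f' unfolding f_def inj_on_def by auto
    moreover have "\<forall>x\<in>Z. (\<exists>e\<in>E. h e = x \<and> (t e \<in> L \<or> (t e \<in> Z \<and> f (t e) < f x)))
      \<and> (\<exists>e\<in>E. h e = x \<and> (t e = r \<or> (t e \<in> Z \<and> f (t e) > f x)))"
    proof
      fix x assume x: "x \<in> Z"
      show "(\<exists>e\<in>E. h e = x \<and> (t e \<in> L \<or> (t e \<in> Z \<and> f (t e) < f x)))
      \<and> (\<exists>e\<in>E. h e = x \<and> (t e = r \<or> (t e \<in> Z \<and> f (t e) > f x)))"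
      proof (cases "x = z")
        case True
        have "rch E t h (insert r Z) {r} z" using less.prems(7) z by auto
        from rch_inv[OF this] rZ z obtain e where e: "e \<in> E" "h e = z" "rch E t h (insert r Z) {r} (t e)"
          by auto
        have "t e \<noteq> z" using loop e by auto
        then have "t e = r \<or> (t e \<in> Z \<and> f (t e) > f x)" using rch_in[OF e(3)] True
          by (auto simp: f_def)
        then show ?thesis using e z True ze by auto
      next
        case False
        then have "x \<in> Z - {z}" using x by auto
        from P[rule_format, OF this] obtain e1 e2 where
          e1: "e1 \<in> E" "h e1 = x" "t e1 \<in> insert z L \<or> (t e1 \<in> Z - {z} \<and> f' (t e1) < f' x)"
          and e2: "e2 \<in> E" "h e2 = x" "t e2 = r \<or> (t e2 \<in> Z - {z} \<and> f' (t e2) > f' x)" by blast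
        have "t e1 \<in> L \<or> (t e1 \<in> Z \<and> f (t e1) < f x)" using e1 False z by (auto simp: f_def)
        moreover have "t e2 = r \<or> (t e2 \<in> Z \<and> f (t e2) > f x)" using e2 False by (auto simp: f_def)
        ultimately show ?thesis using e1 e2 by blast
      qed
    qed
    ultimately show ?thesis by blast
  qed
qed


lemma awalk_rank:
  assumes "\<forall>e\<in>arcs A. g (tail A e) < (g (head A e) :: nat)"
  shows "set p \<subseteq> arcs A \<Longrightarrow> pre_digraph.cas A u p v \<Longrightarrow> g u \<le> g v \<and> (p \<noteq> [] \<longrightarrow> g u < g v)"
proof (induction p arbitrary: u)
  case Nil
  then show ?case by (simp add: pre_digraph.cas.simps)
next
  case (Cons e p)
  then have "e \<in> arcs A" "u = tail A e" "pre_digraph.cas A (head A e) p v" "set p \<subseteq> arcs A"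
    by (auto simp: pre_digraph.cas.simps)
  with Cons.IH[of "head A e"] assms show ?case by fastforce
qed

lemma ranked:
  fixes g :: "'a \<Rightarrow> nat"
  assumes wf: "wf_digraph D" and r: "r \<in> verts D"
    and inn: "\<forall>v\<in>verts D - {r}. \<exists>e\<in>arcs D. head D e = v \<and> g (tail D e) < g v"
    and A: "A = \<lparr>verts = verts D, arcs = {e\<in>arcs D. g (tail D e) < g (head D e)}, tail = tail D, head = head D\<rparr>"
  shows "spanning A D \<and> acyclic_digraph A \<and> (\<forall>v\<in>verts A. r \<rightarrow>\<^sup>*\<^bsub>A\<^esub> v)"
proof (intro conjI)
  have wfA: "wf_digraph A" using wf unfolding A wf_digraph_def by auto
  show "spanning A D" unfolding spanning_def subgraph_def compatible_def
    using wf wfA by (auto simp: A)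
  show "acyclic_digraph A"
    unfolding acyclic_digraph_def pre_digraph.cycle_def
  proof clarify
    fix p u assume "pre_digraph.awalk A u p u" "p \<noteq> []"
    then have "set p \<subseteq> arcs A" "pre_digraph.cas A u p u" by (auto simp: pre_digraph.awalk_def)
    moreover have "\<forall>e\<in>arcs A. g (tail A e) < g (head A e)" by (simp add: A)
    ultimately have "g u < g u" using awalk_rank[of A g p u u] \<open>p \<noteq> []\<close> by blast
    then show False by simp
  qed
  show "\<forall>v\<in>verts A. r \<rightarrow>\<^sup>*\<^bsub>A\<^esub> v"
  proof
    fix v assume "v \<in> verts A"
    then show "r \<rightarrow>\<^sup>*\<^bsub>A\<^esub> v"
    proof (induction "g v" arbitrary: v rule: less_induct)
      case less
      show ?case
      proof (cases "v = r")
        case True then show ?thesis using r by (simp add: reachable_def A)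
      next
        case False
        then obtain e where e: "e \<in> arcs D" "head D e = v" "g (tail D e) < g v"
          using inn less.prems by (auto simp: A)
        have "tail D e \<in> verts A" using e wf by (simp add: A wf_digraph.tail_in_verts)
        then have "r \<rightarrow>\<^sup>*\<^bsub>A\<^esub> tail D e" using less.hyps[OF e(3)] by simp
        moreover have "(tail D e, v) \<in> arcs_ends A"
          using e by (force simp: arcs_ends_def arc_to_ends_def A)
        ultimately show ?thesis using less.prems unfolding reachable_def
          by (rule rtrancl_on_into_rtrancl_on)
      qed
    qed
  qed
qed

lemma reach_rch:
  assumes "u \<rightarrow>\<^sup>*\<^bsub>D \<restriction> S\<^esub> z" "u \<in> X"
  shows "rch (arcs D) (tail D) (head D) S X z"
proof -
  have "(u, z) \<in> rtrancl_on (verts (D \<restriction> S)) (arcs_ends (D \<restriction> S))"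
    using assms(1) by (simp add: reachable_def)
  then show ?thesis
  proof (induction rule: rtrancl_on_induct)
    case base
    then show ?case using assms(2) by (auto intro: rch.base)
  next
    case (step y z)
    then obtain e where e: "e \<in> arcs D" "tail D e = y" "head D e = z" "z \<in> S"
      by (auto simp: arcs_ends_def arc_to_ends_def induce_subgraph_def)
    from rch.step[OF step.IH e(1) e(2)] e show ?case by simp
  qed
qed


theorem corollary1:
  fixes D :: "('a,'b) pre_digraph" and r :: 'a
  assumes "rooted_digraph D r"
    and "two_connected D r"
  shows "\<exists>A. spanning A D \<and> acyclic_digraph A \<and>
             (\<forall>v \<in> verts A. r \<rightarrow>\<^sup>*\<^bsub>A\<^esub> v) \<and>
             card (arcs (D \<restriction> (verts D - {r}))) \<le> 2 * card (arcs A \<inter> arcs (D \<restriction> (verts D - {r})))"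
proof -
  define V where "V = verts D"
  define E where "E = arcs D"
  define t where "t = tail D"
  define h where "h = head D"
  define Z where "Z = V - {r}"
  have fd: "fin_digraph D" and lf: "loopfree_digraph D" and rV: "r \<in> V"
    using assms(1) by (auto simp: rooted_digraph_def V_def)
  have wf: "wf_digraph D" using fd by (simp add: fin_digraph_def)
  have finV: "finite V" and finE: "finite E"
    using fd by (auto simp: V_def E_def fin_digraph_def fin_digraph_axioms_def)
  have loop: "\<forall>e\<in>E. t e \<noteq> h e" using lf by (auto simp: E_def t_def h_def loopfree_digraph_def loopfree_digraph_axioms_def)
  have nocut: "\<not> is_cut D r S" if "card S \<le> 1" for S
    using assms(2) that by (auto simp: two_connected_def)
  have reach0: "rch E t h V {r} z" if "z \<in> V" for z
  proof -
    have "\<not> is_cut D r {}" by (rule nocut) simp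
    then have "r \<rightarrow>\<^sup>*\<^bsub>D \<restriction> V\<^esub> z" using that by (auto simp: is_cut_def V_def)
    then show ?thesis by (auto simp: E_def t_def h_def intro: reach_rch)
  qed
  have reach1: "rch E t h (V - {u}) {r} z" if "u \<in> V - {r}" "z \<in> V - {u}" for u z
  proof -
    have "\<not> is_cut D r {u}" by (rule nocut) simp
    then have "r \<rightarrow>\<^sup>*\<^bsub>D \<restriction> (V - {u})\<^esub> z" using that by (auto simp: is_cut_def V_def)
    then show ?thesis by (auto simp: E_def t_def h_def intro: reach_rch)
  qed
  have VZ: "{r} \<union> Z = V" "insert r Z = V" using rV by (auto simp: Z_def)
  have IL: "\<forall>u. u \<notin> {r} \<longrightarrow> (\<forall>w \<in> Z - {u}. rch E t h ({r} \<union> Z - {u}) {r} w)"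
  proof (intro allI impI ballI)
    fix u w assume u: "u \<notin> {r}" and w: "w \<in> Z - {u}"
    show "rch E t h ({r} \<union> Z - {u}) {r} w"
    proof (cases "u \<in> V")
      case True
      then show ?thesis using reach1[of u w] u w VZ by (auto simp: Z_def)
    next
      case False
      then have "V - {u} = V" by auto
      then show ?thesis using reach0[of w] w VZ by (auto simp: Z_def)
    qed
  qed
  have IL0: "\<forall>w \<in> Z. rch E t h ({r} \<union> Z) {r} w" using reach0 VZ by (auto simp: Z_def)
  have IR: "\<forall>w\<in>Z. rch E t h (insert r Z) {r} w" using reach0 VZ by (auto simp: Z_def)
  have finZ: "finite Z" using finV by (simp add: Z_def)
  obtain f :: "'a \<Rightarrow> nat" where finj: "inj_on f Z" and
    fP: "\<forall>z\<in>Z. (\<exists>e\<in>E. h e = z \<and> (t e \<in> {r} \<or> (t e \<in> Z \<and> f (t e) < f z)))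
      \<and> (\<exists>e\<in>E. h e = z \<and> (t e = r \<or> (t e \<in> Z \<and> f (t e) > f z)))"
    using order_ex[OF finZ loop _ _ IL IL0 IR] by (auto simp: Z_def)
  define M where "M = Max (f ` Z)"
  have fM: "f x \<le> M" if "x \<in> Z" for x using finZ that by (simp add: M_def)
  define F where "F v = (if v = r then 0 else Suc (f v))" for v
  define G where "G v = (if v = r then 0 else Suc (M - f v))" for v
  define A1 where "A1 = \<lparr>verts = verts D, arcs = {e\<in>arcs D. F (tail D e) < F (head D e)}, tail = tail D, head = head D\<rparr>"
  define A2 where "A2 = \<lparr>verts = verts D, arcs = {e\<in>arcs D. G (tail D e) < G (head D e)}, tail = tail D, head = head D\<rparr>"
  have inF: "\<forall>v\<in>verts D - {r}. \<exists>e\<in>arcs D. head D e = v \<and> F (tail D e) < F v"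
  proof
    fix v assume "v \<in> verts D - {r}"
    then have v: "v \<in> Z" by (simp add: Z_def V_def)
    then obtain e where "e \<in> E" "h e = v" "t e \<in> {r} \<or> (t e \<in> Z \<and> f (t e) < f v)" using fP by blast
    then show "\<exists>e\<in>arcs D. head D e = v \<and> F (tail D e) < F v" using v
      by (auto simp: F_def E_def h_def t_def Z_def)
  qed
  have inG: "\<forall>v\<in>verts D - {r}. \<exists>e\<in>arcs D. head D e = v \<and> G (tail D e) < G v"
  proof
    fix v assume "v \<in> verts D - {r}"
    then have v: "v \<in> Z" by (simp add: Z_def V_def)
    then obtain e where e: "e \<in> E" "h e = v" "t e = r \<or> (t e \<in> Z \<and> f (t e) > f v)" using fP by blast
    have "G (t e) < G v"
    proof (cases "t e = r")
      case True then show ?thesis using v by (auto simp: G_def Z_def)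
    next
      case False
      then have "t e \<in> Z" "f (t e) > f v" using e by auto
      then have "M - f (t e) < M - f v" using fM[of "t e"] by arith
      then show ?thesis using v False by (auto simp: G_def Z_def)
    qed
    then show "\<exists>e\<in>arcs D. head D e = v \<and> G (tail D e) < G v" using e
      by (auto simp: E_def h_def t_def)
  qed
  have rD: "r \<in> verts D" using rV by (simp add: V_def)
  have R1: "spanning A1 D \<and> acyclic_digraph A1 \<and> (\<forall>v\<in>verts A1. r \<rightarrow>\<^sup>*\<^bsub>A1\<^esub> v)"
    by (rule ranked[OF wf rD inF A1_def])
  have R2: "spanning A2 D \<and> acyclic_digraph A2 \<and> (\<forall>v\<in>verts A2. r \<rightarrow>\<^sup>*\<^bsub>A2\<^esub> v)"
    by (rule ranked[OF wf rD inG A2_def])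
  define N where "N = arcs (D \<restriction> (verts D - {r}))"
  have "N \<subseteq> (arcs A1 \<inter> N) \<union> (arcs A2 \<inter> N)"
  proof
    fix e assume eN: "e \<in> N"
    then have e: "e \<in> E" "t e \<in> Z" "h e \<in> Z"
      by (auto simp: N_def induce_subgraph_def E_def t_def h_def Z_def V_def)
    have "t e \<noteq> h e" using loop e by auto
    then have "f (t e) \<noteq> f (h e)" using finj e inj_on_eq_iff by metis
    then consider "f (t e) < f (h e)" | "f (t e) > f (h e)" by linarith
    then show "e \<in> (arcs A1 \<inter> N) \<union> (arcs A2 \<inter> N)"
    proof cases
      case 1
      then have "F (t e) < F (h e)" using e by (auto simp: F_def Z_def)
      then show ?thesis using e eN by (auto simp: A1_def E_def t_def h_def)
    next
      case 2
      then have "M - f (t e) < M - f (h e)" using fM[OF e(2)] by arith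
      then have "G (t e) < G (h e)" using e by (auto simp: G_def Z_def)
      then show ?thesis using e eN by (auto simp: A2_def E_def t_def h_def)
    qed
  qed
  moreover have finN: "finite N" using finE by (auto simp: N_def induce_subgraph_def E_def)
  ultimately have "card N \<le> card (arcs A1 \<inter> N) + card (arcs A2 \<inter> N)"
    by (meson card_Un_le card_mono finite_Un le_trans finite_subset Int_lower2)
  then have "card N \<le> 2 * card (arcs A1 \<inter> N) \<or> card N \<le> 2 * card (arcs A2 \<inter> N)" by linarith
  then show ?thesis using R1 R2 unfolding N_def by blast
qed

end
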